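(* Let $\mu,\eta,\gamma,\delta>0$ with $\mu>\eta$ and $\Re(p)>0$. Then $$\mathfrak{D}_{z}^{\eta-\mu}\left\{z^{\eta-1}E_{\gamma,\delta}^{\mu}(z);p\right\}=z^{\mu-1}\frac{\Gamma(\eta)}{\Gamma(\mu)}\,E_{1,\gamma,\delta;p}^{(\mu,\eta,\mu)}(z).$$
   Context: For $\Re(\nu)<0$, $\mathfrak{D}_{z}^{\nu}\{f(z);p\}=\frac{1}{\Gamma(-\nu)}\int_0^z f(t)(z-t)^{-\nu-1}\exp\!\left(-\frac{pz^2}{t(z-t)}\right)dt$. $B_p(a,b)=\int_0^1 t^{a-1}(1-t)^{b-1}e^{-\frac{p}{t(1-t)}}dt$ and $B$ is the classical Beta function. $E_{\gamma,\delta}^{\mu}(z)=\sum_{n\ge0}\frac{(\mu)_n}{\Gamma(\gamma n+\delta)}\frac{z^n}{n!}$. The $p$-Mittag-Leffler function is $E_{\lambda,\gamma,\delta;p}^{(\mu,\eta,\omega)}(z)=\sum_{k=0}^\infty\frac{(\mu)_k}{[\Gamma(\gamma k+\delta)]^\lambda}\frac{B_p(\eta+k,\omega-\eta)}{B(\eta,\omega-\eta)}\frac{z^k}{k!}$. *)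

theory Defs
  imports "HOL-Complex_Analysis.Complex_Analysis"
begin

definition Beta_p :: "complex \<Rightarrow> real \<Rightarrow> real \<Rightarrow> complex" where
  "Beta_p p a b = integral {0..1::real}
     (\<lambda>t. complex_of_real (t powr (a - 1) * (1 - t) powr (b - 1))
          * exp (- p / complex_of_real (t * (1 - t))))"

definition ML3 :: "real \<Rightarrow> real \<Rightarrow> real \<Rightarrow> complex \<Rightarrow> complex" where
  "ML3 \<gamma> \<delta> \<mu> z = (\<Sum>n. complex_of_real (pochhammer \<mu> n / Gamma (\<gamma> * real n + \<delta>))
                          * z ^ n / of_nat (fact n))"

definition pML :: "real \<Rightarrow> real \<Rightarrow> real \<Rightarrow> complex \<Rightarrow> real \<Rightarrow> real \<Rightarrow> real \<Rightarrow> complex \<Rightarrow> complex" where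
  "pML lam \<gamma> \<delta> p \<mu> \<eta> \<omega> z = (\<Sum>k.
      complex_of_real (pochhammer \<mu> k / (Gamma (\<gamma> * real k + \<delta>)) powr lam)
      * Beta_p p (\<eta> + real k) (\<omega> - \<eta>) / complex_of_real (Beta \<eta> (\<omega> - \<eta>))
      * z ^ k / of_nat (fact k))"

text \<open>Extended Riemann-Liouville fractional derivative for Re nu < 0, integral along the
  segment from 0 to z (principal branch powers).\<close>
definition frac_D_p :: "complex \<Rightarrow> (complex \<Rightarrow> complex) \<Rightarrow> complex \<Rightarrow> complex \<Rightarrow> complex" where
  "frac_D_p \<nu> f p z = (1 / Gamma (- \<nu>)) *
     contour_integral (linepath 0 z)
       (\<lambda>t. f t * (z - t) powr (- \<nu> - 1) * exp (- p * z ^ 2 / (t * (z - t))))"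

end

theory Submission
  imports Defs
begin

lemma poch_le: fixes \<mu> :: real assumes "\<mu> > 0" shows "pochhammer \<mu> n \<le> (max \<mu> 1) ^ n * fact n"
proof (induction n)
  case 0 then show ?case by simp
next
  case (Suc n)
  have p: "pochhammer \<mu> n \<ge> 0" using assms by (simp add: pochhammer_nonneg)
  have "pochhammer \<mu> (Suc n) = pochhammer \<mu> n * (\<mu> + n)" by (simp add: pochhammer_Suc)
  have "real n \<le> max \<mu> 1 * real n" by (simp add: mult_le_cancel_right1) 
  then have q: "\<mu> + real n \<le> max \<mu> 1 * (real n + 1)"
      by (simp add: distrib_left)
  have "pochhammer \<mu> n * (\<mu> + n) \<le> ((max \<mu> 1) ^ n * fact n) * (max \<mu> 1 * (real n + 1))"
    by (rule mult_mono[OF Suc q]) (use p assms in auto)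
  also have "\<dots> = (max \<mu> 1) ^ Suc n * fact (Suc n)" by (simp add: algebra_simps)
  finally show ?case by (simp add: pochhammer_Suc)
qed

lemma pow_le_exp_fact: fixes B :: real assumes "B \<ge> 0" shows "B ^ k \<le> exp B * fact k"
proof -
  have s: "(\<lambda>n. B ^ n / fact n) sums exp B"
    using exp_converges[of B] by (simp add: divide_inverse mult.commute)
  have "B ^ k / fact k \<le> (\<Sum>n. B ^ n / fact n)"
    using sum_le_suminf[of "\<lambda>n. B ^ n / fact n" "{k}"] assms s by (auto simp: sums_iff)
  also have "\<dots> = exp B" using s by (simp add: sums_iff)
  finally show ?thesis by (simp add: field_simps)
qed

lemma Gamma_ge_fact: fixes x :: real assumes "x \<ge> 2"
  shows "Gamma x \<ge> fact (nat \<lfloor>x\<rfloor> - 1)" "real (nat \<lfloor>x\<rfloor> - 1) \<ge> x - 2"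
proof -
  define k where "k = nat \<lfloor>x\<rfloor>"
  have k2: "k \<ge> 2" using assms unfolding k_def by linarith
  have kx: "real k \<le> x" "x < real k + 1" unfolding k_def using assms by linarith+
  have "Gamma (real k) = fact (k - 1)"
    using Gamma_fact[of "k-1"] k2 by (simp add: of_nat_diff)
  moreover have "Gamma (real k) \<le> Gamma x"
  proof (cases "real k = x")
    case False
    then show ?thesis using Gamma_real_strict_mono[of "real k" x] kx k2 by simp
  qed simp
  ultimately show "Gamma x \<ge> fact (nat \<lfloor>x\<rfloor> - 1)" unfolding k_def by simp
  show "real (nat \<lfloor>x\<rfloor> - 1) \<ge> x - 2" using kx k2 unfolding k_def[symmetric] by (simp add: of_nat_diff)
qed

lemma summable_Gamma_geom:
  fixes R \<gamma> \<delta> :: real assumes R: "R \<ge> 0" and g: "\<gamma> > 0" and d: "\<delta> > 0"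
  shows "summable (\<lambda>n. R ^ n / Gamma (\<gamma> * real n + \<delta>))"
proof -
  define B where "B = max 1 ((2*R) powr (1/\<gamma>))"
  have B1: "B \<ge> 1" unfolding B_def by simp
  have BR: "B powr \<gamma> \<ge> 2 * R"
  proof (cases "R = 0")
    case True then show ?thesis using B1 by simp
  next
    case False
    then have "(2*R) powr (1/\<gamma>) \<le> B" unfolding B_def by simp
    then have "((2*R) powr (1/\<gamma>)) powr \<gamma> \<le> B powr \<gamma>" using g by (intro powr_mono2) auto
    also have "((2*R) powr (1/\<gamma>)) powr \<gamma> = 2 * R" using g R False by (simp add: powr_powr)
    finally show ?thesis .
  qed
  have Bg: "B powr \<gamma> > 0" using B1 by simp
  define q where "q = R / B powr \<gamma>"
  have q: "0 \<le> q" "q \<le> 1/2" unfolding q_def using R Bg BR by (auto simp: field_simps)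
  define C where "C = exp B * B powr (2 - \<delta>)"
  obtain N :: nat where N: "real N * \<gamma> \<ge> 2" 
    using reals_Archimedean3[OF g] by (metis less_le_not_le) 
  show ?thesis
  proof (rule summable_comparison_test')
    show "summable (\<lambda>n. C * q ^ n)" using q by (intro summable_mult summable_geometric) auto
  next
    fix n :: nat assume n: "n \<ge> N"
    define x where "x = \<gamma> * real n + \<delta>"
    have x2: "x \<ge> 2" unfolding x_def using N n g d
      by (smt (verit, ccfv_SIG) mult.commute mult_left_mono of_nat_mono)
    define j where "j = nat \<lfloor>x\<rfloor> - 1"
    have G: "Gamma x \<ge> fact j" "real j \<ge> x - 2" using Gamma_ge_fact[OF x2] unfolding j_def by auto
    have fpos: "(fact j :: real) > 0" by simp
    have "B powr (x - 2) \<le> B powr (real j)" using B1 G(2) by (intro powr_mono) auto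
    also have "\<dots> = B ^ j" using B1 by (simp add: powr_realpow)
    also have "\<dots> \<le> exp B * fact j" using B1 by (intro pow_le_exp_fact) auto
    finally have Bj: "B powr (x - 2) \<le> exp B * fact j" .
    have Bx: "B powr (x - 2) = (B powr \<gamma>) ^ n * B powr (\<delta> - 2)"
      unfolding x_def using B1
      by (simp add: powr_add[symmetric] powr_realpow[symmetric] powr_powr algebra_simps)
    have "norm (R ^ n / Gamma x) = R ^ n / Gamma x" using R x2 by simp
    also have "\<dots> \<le> R ^ n / fact j" using G(1) fpos R Gamma_real_pos[of x] x2 by (intro divide_left_mono) auto
    also have "\<dots> \<le> R ^ n * exp B / B powr (x - 2)"
      using Bj fpos B1 R mult_left_mono[OF Bj, of "R^n"] by (simp add: field_simps mult_ac) 
    also have "\<dots> = C * q ^ n" unfolding C_def q_def Bx using B1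
      by (simp add: field_simps power_divide powr_diff powr_minus)
    finally show "norm (R ^ n / Gamma (\<gamma> * real n + \<delta>)) \<le> C * q ^ n" unfolding x_def .
  qed
qed

lemma norm_exp_factor:
  fixes p :: complex and s :: real assumes "Re p \<ge> 0" "s \<in> {0..1}"
  shows "norm (exp (- p / complex_of_real (s * (1 - s)))) \<le> 1"
proof -
  have r: "s * (1 - s) \<ge> 0" using assms by auto
  have "Re (- p / complex_of_real (s * (1 - s))) = - Re p / (s * (1 - s))"
    by (simp add: Re_divide_of_real)
  also have "\<dots> \<le> 0" using assms r by (simp add: divide_nonneg_nonneg)
  finally show ?thesis by simp
qed

lemma integrand_meas: fixes p :: complex shows
  "(\<lambda>s. indicator {0..1::real} s *\<^sub>R (c * complex_of_real (s powr (a - 1) * (1 - s) powr (b - 1))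
        * exp (- p / complex_of_real (s * (1 - s))))) \<in> borel_measurable lborel"
  by measurable

lemma term_bound:
  fixes p c :: complex and s a b :: real
  assumes "Re p \<ge> 0" "s \<in> {0..1}"
  shows "norm (c * complex_of_real (s powr (a + real n - 1) * (1 - s) powr (b - 1))
        * exp (- p / complex_of_real (s * (1 - s)))) \<le> norm c * (s powr (a - 1) * (1 - s) powr (b - 1))"
proof -
  have e: "norm (exp (- p / complex_of_real (s * (1 - s)))) \<le> 1" by (rule norm_exp_factor[OF assms])
  have pw: "s powr (a + real n - 1) \<le> s powr (a - 1)"
  proof (cases "s = 0")
    case False then show ?thesis using assms by (intro powr_mono') auto
  qed simp
  have "norm (c * complex_of_real (s powr (a + real n - 1) * (1 - s) powr (b - 1))
        * exp (- p / complex_of_real (s * (1 - s))))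
      = norm c * (s powr (a + real n - 1) * (1 - s) powr (b - 1)) * norm (exp (- p / complex_of_real (s * (1 - s))))"
    by (simp add: norm_mult)
  also have "\<dots> \<le> norm c * (s powr (a + real n - 1) * (1 - s) powr (b - 1)) * 1"
    by (intro mult_left_mono e) auto
  also have "\<dots> \<le> norm c * (s powr (a - 1) * (1 - s) powr (b - 1))"
    by (simp add: mult_left_mono mult_right_mono pw)
  finally show ?thesis .
qed

lemma term_integrable:
  fixes p c :: complex and a b :: real
  assumes "Re p \<ge> 0" "a > 0" "b > 0"
  shows "set_integrable lborel {0..1} (\<lambda>s. c * complex_of_real (s powr (a + real n - 1) * (1 - s) powr (b - 1))
        * exp (- p / complex_of_real (s * (1 - s))))"
  unfolding set_integrable_def
proof (rule Bochner_Integration.integrable_bound[OF _ _ AE_I2])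
  show "integrable lborel (\<lambda>s. indicator {0..1} s *\<^sub>R (norm c * (s powr (a - 1) * (1 - s) powr (b - 1))))"
    using integrable_mult_right[OF integrable_Beta[OF assms(2,3), unfolded set_integrable_def], of "norm c"]
    by (simp add: mult_ac)
  show "(\<lambda>s. indicator {0..1::real} s *\<^sub>R (c * complex_of_real (s powr (a + real n - 1) * (1 - s) powr (b - 1))
        * exp (- p / complex_of_real (s * (1 - s))))) \<in> borel_measurable lborel"
    by measurable
  fix s :: real
  show "norm (indicator {0..1} s *\<^sub>R (c * complex_of_real (s powr (a + real n - 1) * (1 - s) powr (b - 1))
        * exp (- p / complex_of_real (s * (1 - s)))))
     \<le> norm (indicator {0..1} s *\<^sub>R (norm c * (s powr (a - 1) * (1 - s) powr (b - 1))))"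
    using term_bound[OF assms(1), of s c a n b] by (auto simp: indicator_def)
qed

lemma interchange:
  fixes p :: complex and d :: "nat \<Rightarrow> complex" and a b :: real
  assumes p: "Re p \<ge> 0" and ab: "a > 0" "b > 0" and sd: "summable (\<lambda>n. norm (d n))"
  defines "F \<equiv> (\<lambda>n s. d n * complex_of_real (s powr (a + real n - 1) * (1 - s) powr (b - 1))
        * exp (- p / complex_of_real (s * (1 - s))))"
  shows "(\<lambda>n. integral {0..1} (F n)) sums integral {0..1} (\<lambda>s. \<Sum>n. F n s)"
proof -
  define f where "f = (\<lambda>n s. indicator {0..1::real} s *\<^sub>R F n s)"
  define w where "w = (\<lambda>s::real. s powr (a - 1) * (1 - s) powr (b - 1))"
  have SI: "set_integrable lborel {0..1} (F n)" for n
    unfolding F_def by (rule term_integrable[OF p ab])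
  have I: "integrable lborel (f i)" for i using SI[of i] unfolding f_def set_integrable_def by simp
  have wI: "integrable lborel (\<lambda>s. indicator {0..1} s *\<^sub>R w s)"
    using integrable_Beta[OF ab] unfolding w_def set_integrable_def by simp
  have wint: "(\<integral>s. indicator {0..1} s *\<^sub>R w s \<partial>lborel) = Beta a b"
  proof -
    have "(LINT s:{0..1}|lborel. w s) = integral {0..1} w"
      using set_borel_integral_eq_integral(2)[OF integrable_Beta[OF ab]] unfolding w_def by simp
    also have "\<dots> = Beta a b" using has_integral_Beta_real[OF ab] unfolding w_def by (rule integral_unique)
    finally show ?thesis by (simp add: set_lebesgue_integral_def)
  qed
  have bnd: "norm (f i s) \<le> norm (d i) * (indicator {0..1} s *\<^sub>R w s)" for i s
    using term_bound[OF p, of s "d i" a i b] unfolding f_def F_def w_def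
    by (auto simp: indicator_def)
  have wpos: "indicator {0..1} s *\<^sub>R w s \<ge> 0" for s unfolding w_def by (auto simp: indicator_def)
  have AE: "AE x in lborel. summable (\<lambda>i. norm (f i x))"
  proof (rule AE_I2)
    fix x
    show "summable (\<lambda>i. norm (f i x))"
      by (rule summable_comparison_test[OF _ summable_mult2[OF sd]]) (use bnd in auto)
  qed
  have SM: "summable (\<lambda>i. \<integral>x. norm (f i x) \<partial>lborel)"
  proof (rule summable_comparison_test[OF _ summable_mult2[OF sd, of "Beta a b"]])
    show "\<exists>N. \<forall>n\<ge>N. norm (\<integral>x. norm (f n x) \<partial>lborel) \<le> norm (d n) * Beta a b"
    proof (intro exI allI impI)
      fix n :: nat
      have "norm (\<integral>x. norm (f n x) \<partial>lborel) = (\<integral>x. norm (f n x) \<partial>lborel)" by simp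
      also have "\<dots> \<le> (\<integral>x. norm (d n) * (indicator {0..1} x *\<^sub>R w x) \<partial>lborel)"
        by (intro integral_mono integrable_norm I integrable_mult_right wI bnd)
      also have "\<dots> = norm (d n) * Beta a b" using wint by simp
      finally show "norm (\<integral>x. norm (f n x) \<partial>lborel) \<le> norm (d n) * Beta a b" .
    qed
  qed
  have S: "(\<lambda>i. integral\<^sup>L lborel (f i)) sums (\<integral>x. (\<Sum>i. f i x) \<partial>lborel)"
    and SI2: "integrable lborel (\<lambda>x. (\<Sum>i. f i x))"
    by (rule sums_integral[OF I AE SM], rule integrable_suminf[OF I AE SM])
  have sumf: "(\<Sum>i. f i x) = indicator {0..1} x *\<^sub>R (\<Sum>i. F i x)" for x
    unfolding f_def by (auto simp: indicator_def)
  have SI3: "set_integrable lborel {0..1} (\<lambda>x. \<Sum>i. F i x)"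
    using SI2 unfolding set_integrable_def sumf .
  have "integral\<^sup>L lborel (f i) = integral {0..1} (F i)" for i
    using set_borel_integral_eq_integral(2)[OF SI[of i]] unfolding f_def set_lebesgue_integral_def by simp
  moreover have "(\<integral>x. (\<Sum>i. f i x) \<partial>lborel) = integral {0..1} (\<lambda>s. \<Sum>n. F n s)"
    using set_borel_integral_eq_integral(2)[OF SI3] unfolding sumf set_lebesgue_integral_def by simp
  ultimately show ?thesis using S by simp
qed

lemma coef_summable:
  fixes \<mu> \<gamma> \<delta> :: real and z :: complex
  assumes "\<mu> > 0" "\<gamma> > 0" "\<delta> > 0"
  shows "summable (\<lambda>n. norm (complex_of_real (pochhammer \<mu> n / Gamma (\<gamma> * real n + \<delta>)) * z ^ n / of_nat (fact n)))"
proof (rule summable_comparison_test[OF _ summable_Gamma_geom[of "max \<mu> 1 * norm z", OF _ assms(2,3)]])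
  show "\<exists>N. \<forall>n\<ge>N. norm (norm (complex_of_real (pochhammer \<mu> n / Gamma (\<gamma> * real n + \<delta>)) * z ^ n / of_nat (fact n)))
        \<le> (max \<mu> 1 * norm z) ^ n / Gamma (\<gamma> * real n + \<delta>)"
  proof (intro exI allI impI)
    fix n :: nat
    have G: "Gamma (\<gamma> * real n + \<delta>) > 0" using assms by (intro Gamma_real_pos add_nonneg_pos) auto
    have P: "pochhammer \<mu> n \<ge> 0" using assms by (simp add: pochhammer_nonneg)
    have "norm (norm (complex_of_real (pochhammer \<mu> n / Gamma (\<gamma> * real n + \<delta>)) * z ^ n / of_nat (fact n)))
        = pochhammer \<mu> n / fact n * norm z ^ n / Gamma (\<gamma> * real n + \<delta>)"
      using G P by (simp add: norm_mult norm_divide norm_power)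
    also have "\<dots> \<le> max \<mu> 1 ^ n * norm z ^ n / Gamma (\<gamma> * real n + \<delta>)"
      using poch_le[OF assms(1), of n] G
      by (intro divide_right_mono mult_right_mono) (auto simp: field_simps)
    also have "\<dots> = (max \<mu> 1 * norm z) ^ n / Gamma (\<gamma> * real n + \<delta>)" by (simp add: power_mult_distrib)
    finally show "norm (norm (complex_of_real (pochhammer \<mu> n / Gamma (\<gamma> * real n + \<delta>)) * z ^ n / of_nat (fact n)))
        \<le> (max \<mu> 1 * norm z) ^ n / Gamma (\<gamma> * real n + \<delta>)" .
  qed
qed simp

lemma powr_of_real_mult:
  fixes z :: complex and s a :: real assumes "s > 0" "z \<noteq> 0"
  shows "(complex_of_real s * z) powr complex_of_real a = complex_of_real (s powr a) * z powr complex_of_real a"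
proof -
  have "Ln (complex_of_real s * z) = complex_of_real (ln s) + Ln z" using assms by (simp add: Ln_times_of_real Ln_of_real)
  then show ?thesis using assms
    by (simp add: powr_def distrib_left exp_add exp_of_real[symmetric] mult.commute Ln_of_real[OF assms(1)])
qed

lemma pointwise:
  fixes \<mu> \<eta> \<gamma> \<delta> s :: real and p z :: complex
  assumes "\<mu> > 0" "\<gamma> > 0" "\<delta> > 0" and s: "0 < s" "s < 1" and z: "z \<noteq> 0"
  defines "c \<equiv> (\<lambda>n. complex_of_real (pochhammer \<mu> n / Gamma (\<gamma> * real n + \<delta>)) / of_nat (fact n))"
  shows "(\<lambda>t. t powr complex_of_real (\<eta> - 1) * ML3 \<gamma> \<delta> \<mu> t * (z - t) powr (- complex_of_real (\<eta> - \<mu>) - 1)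
            * exp (- p * z ^ 2 / (t * (z - t)))) (linepath 0 z s) * (z - 0)
       = z powr complex_of_real (\<mu> - 1) * (\<Sum>n. c n * z ^ n * complex_of_real (s powr (\<eta> + real n - 1) * (1 - s) powr (\<mu> - \<eta> - 1))
        * exp (- p / complex_of_real (s * (1 - s))))"
proof -
  define t where "t = complex_of_real s * z"
  have lp: "linepath 0 z s = t" unfolding t_def linepath_def by (simp add: scaleR_conv_of_real)
  have A1: "t powr complex_of_real (\<eta> - 1) = complex_of_real (s powr (\<eta> - 1)) * z powr complex_of_real (\<eta> - 1)"
    unfolding t_def using s z by (intro powr_of_real_mult) auto
  have zt: "z - t = complex_of_real (1 - s) * z" unfolding t_def by (simp add: algebra_simps)
  have ex: "- complex_of_real (\<eta> - \<mu>) - 1 = complex_of_real (\<mu> - \<eta> - 1)" by simp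
  have A2: "(z - t) powr (- complex_of_real (\<eta> - \<mu>) - 1)
      = complex_of_real ((1 - s) powr (\<mu> - \<eta> - 1)) * z powr complex_of_real (\<mu> - \<eta> - 1)"
    unfolding zt ex using s z by (intro powr_of_real_mult) auto
  have A3: "- p * z ^ 2 / (t * (z - t)) = - p / complex_of_real (s * (1 - s))"
    unfolding zt t_def using s z by (simp add: field_simps power2_eq_square)
  have sm: "summable (\<lambda>n. c n * z ^ n * complex_of_real (s ^ n))"
  proof -
    have "summable (\<lambda>n. norm (complex_of_real (pochhammer \<mu> n / Gamma (\<gamma> * real n + \<delta>)) * t ^ n / of_nat (fact n)))"
      by (rule coef_summable) (use assms in auto)
    then have "summable (\<lambda>n. complex_of_real (pochhammer \<mu> n / Gamma (\<gamma> * real n + \<delta>)) * t ^ n / of_nat (fact n))"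
      by (rule summable_norm_cancel)
    moreover have "complex_of_real (pochhammer \<mu> n / Gamma (\<gamma> * real n + \<delta>)) * t ^ n / of_nat (fact n)
        = c n * z ^ n * complex_of_real (s ^ n)" for n
      unfolding c_def t_def by (simp add: power_mult_distrib)
    ultimately show ?thesis by simp
  qed
  have A4: "ML3 \<gamma> \<delta> \<mu> t = (\<Sum>n. c n * z ^ n * complex_of_real (s ^ n))"
    unfolding ML3_def c_def t_def by (simp add: power_mult_distrib mult_ac)
  define W where "W = complex_of_real (s powr (\<eta> - 1) * (1 - s) powr (\<mu> - \<eta> - 1)) * exp (- p / complex_of_real (s * (1 - s)))"
  have tm: "c n * z ^ n * complex_of_real (s powr (\<eta> + real n - 1) * (1 - s) powr (\<mu> - \<eta> - 1))
        * exp (- p / complex_of_real (s * (1 - s))) = c n * z ^ n * complex_of_real (s ^ n) * W" for n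
  proof -
    have "s powr (\<eta> + real n - 1) = s ^ n * s powr (\<eta> - 1)"
      using s by (simp add: powr_add[symmetric] powr_realpow[symmetric] algebra_simps)
    then show ?thesis unfolding W_def by (simp add: mult_ac)
  qed
  have A5: "(\<Sum>n. c n * z ^ n * complex_of_real (s powr (\<eta> + real n - 1) * (1 - s) powr (\<mu> - \<eta> - 1))
        * exp (- p / complex_of_real (s * (1 - s)))) = (\<Sum>n. c n * z ^ n * complex_of_real (s ^ n)) * W"
    unfolding tm by (rule suminf_mult2[OF sm, symmetric])
  have A6: "z powr complex_of_real (\<eta> - 1) * z powr complex_of_real (\<mu> - \<eta> - 1) * z = z powr complex_of_real (\<mu> - 1)"
  proof -
    have "z powr complex_of_real (\<mu> - 1) = z powr (complex_of_real (\<eta> - 1) + complex_of_real (\<mu> - \<eta> - 1) + 1)"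
      by simp
    also have "\<dots> = z powr complex_of_real (\<eta> - 1) * z powr complex_of_real (\<mu> - \<eta> - 1) * z"
      by (simp only: powr_add powr_to_1)
    finally show ?thesis by simp
  qed
  show ?thesis
    unfolding lp A1 A2 A3 A4 A5 A6[symmetric] W_def by (simp add: mult_ac)
qed

theorem mainTheorem13:
  fixes \<mu> \<eta> \<gamma> \<delta> :: real and p z :: complex
  assumes "\<mu> > 0" "\<eta> > 0" "\<gamma> > 0" "\<delta> > 0" "\<mu> > \<eta>" "Re p > 0"
  shows "frac_D_p (complex_of_real (\<eta> - \<mu>))
           (\<lambda>t. t powr complex_of_real (\<eta> - 1) * ML3 \<gamma> \<delta> \<mu> t) p z
         = z powr complex_of_real (\<mu> - 1) * complex_of_real (Gamma \<eta> / Gamma \<mu>)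
           * pML 1 \<gamma> \<delta> p \<mu> \<eta> \<mu> z"
proof (cases "z = 0")
  case True
  then show ?thesis by (simp add: frac_D_p_def contour_integral_unique)
next
  case z: False
  define c where "c = (\<lambda>n. complex_of_real (pochhammer \<mu> n / Gamma (\<gamma> * real n + \<delta>)) / of_nat (fact n))"
  define F where "F = (\<lambda>n s. c n * z ^ n * complex_of_real (s powr (\<eta> + real n - 1) * (1 - s) powr (\<mu> - \<eta> - 1))
        * exp (- p / complex_of_real (s * (1 - s))))"
  define G where "G = (\<lambda>t. t powr complex_of_real (\<eta> - 1) * ML3 \<gamma> \<delta> \<mu> t * (z - t) powr (- complex_of_real (\<eta> - \<mu>) - 1)
            * exp (- p * z ^ 2 / (t * (z - t))))"
  define K where "K = z powr complex_of_real (\<mu> - 1)"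
  define Bp where "Bp = (\<lambda>n. Beta_p p (\<eta> + real n) (\<mu> - \<eta>))"
  have ci: "contour_integral (linepath 0 z) G = integral {0..1} (\<lambda>s. G (linepath 0 z s) * (z - 0))"
    by (simp add: contour_integral_integral)
  also have "\<dots> = integral {0..1} (\<lambda>s. K * (\<Sum>n. F n s))"
  proof (rule integral_spike[of "{0,1}"])
    show "negligible {0::real, 1}" by simp
    fix s assume "s \<in> {0..1} - {0::real, 1}"
    then have "0 < s" "s < 1" by auto
    then show "K * (\<Sum>n. F n s) = G (linepath 0 z s) * (z - 0)"
      unfolding G_def K_def F_def c_def using pointwise[OF assms(1,3,4) _ _ z, of s \<eta> p] by simp
  qed
  also have "\<dots> = K * integral {0..1} (\<lambda>s. \<Sum>n. F n s)" by simp
  finally have ci2: "contour_integral (linepath 0 z) G = K * integral {0..1} (\<lambda>s. \<Sum>n. F n s)" .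
  have sd: "summable (\<lambda>n. norm (c n * z ^ n))"
    using coef_summable[OF assms(1,3,4), of z] unfolding c_def by (simp add: mult_ac)
  have S: "(\<lambda>n. integral {0..1} (F n)) sums integral {0..1} (\<lambda>s. \<Sum>n. F n s)"
    unfolding F_def by (rule interchange[OF _ _ _ sd]) (use assms in auto)
  have IF: "integral {0..1} (F n) = c n * z ^ n * Bp n" for n
  proof -
    have "integral {0..1} (F n) = integral {0..1} (\<lambda>s. c n * z ^ n * (complex_of_real (s powr (\<eta> + real n - 1) * (1 - s) powr (\<mu> - \<eta> - 1))
        * exp (- p / complex_of_real (s * (1 - s)))))"
      unfolding F_def by (simp add: mult.assoc)
    also have "\<dots> = c n * z ^ n * Bp n"
      unfolding Bp_def Beta_p_def by (simp add: algebra_simps)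
    finally show ?thesis .
  qed
  have S2: "(\<lambda>n. c n * z ^ n * Bp n) sums integral {0..1} (\<lambda>s. \<Sum>n. F n s)" using S unfolding IF .
  have gpos: "Gamma \<eta> > 0" "Gamma \<mu> > 0" "Gamma (\<mu> - \<eta>) > 0"
    using assms by (auto intro!: Gamma_real_pos)
  have Bne: "Beta \<eta> (\<mu> - \<eta>) = Gamma \<eta> * Gamma (\<mu> - \<eta>) / Gamma \<mu>" by (simp add: Beta_def)
  have pML_eq: "pML 1 \<gamma> \<delta> p \<mu> \<eta> \<mu> z = integral {0..1} (\<lambda>s. \<Sum>n. F n s) / complex_of_real (Beta \<eta> (\<mu> - \<eta>))"
  proof -
    have Gp: "Gamma (\<gamma> * real k + \<delta>) > 0" for k using assms by (intro Gamma_real_pos add_nonneg_pos) auto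
    have "(\<lambda>k. complex_of_real (pochhammer \<mu> k / (Gamma (\<gamma> * real k + \<delta>)) powr 1)
      * Beta_p p (\<eta> + real k) (\<mu> - \<eta>) / complex_of_real (Beta \<eta> (\<mu> - \<eta>))
      * z ^ k / of_nat (fact k)) = (\<lambda>k. c k * z ^ k * Bp k / complex_of_real (Beta \<eta> (\<mu> - \<eta>)))"
      using Gp unfolding c_def Bp_def by (auto simp: abs_of_pos mult_ac intro!: ext)
    moreover have "(\<lambda>k. c k * z ^ k * Bp k / complex_of_real (Beta \<eta> (\<mu> - \<eta>))) sums
        (integral {0..1} (\<lambda>s. \<Sum>n. F n s) / complex_of_real (Beta \<eta> (\<mu> - \<eta>)))"
      by (rule sums_divide[OF S2])
    ultimately show ?thesis unfolding pML_def by (simp add: sums_iff)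
  qed
  have "frac_D_p (complex_of_real (\<eta> - \<mu>)) (\<lambda>t. t powr complex_of_real (\<eta> - 1) * ML3 \<gamma> \<delta> \<mu> t) p z
     = (1 / complex_of_real (Gamma (\<mu> - \<eta>))) * (K * integral {0..1} (\<lambda>s. \<Sum>n. F n s))"
    unfolding frac_D_p_def ci2[unfolded G_def, symmetric] by (simp add: Gamma_complex_of_real[symmetric])
  also have "\<dots> = K * complex_of_real (Gamma \<eta> / Gamma \<mu>) * pML 1 \<gamma> \<delta> p \<mu> \<eta> \<mu> z"
    unfolding pML_eq Bne using gpos by (simp add: field_simps)
  finally show ?thesis unfolding K_def .
qed

end
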